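(* Let $\mathbb{F}_q$ be a finite field of odd characteristic $p$ with $q = p^n$. If $n$ is even, then equilateral triangles of nonzero sidelength exist in the plane $\mathbb{F}_q^2$. If $n$ is odd, they exist if and only if $p \equiv 1, 3$ or $11 \pmod{12}$.
   Context: For $u,v \in \mathbb{F}_q^2$, $\|u-v\| = (u_1-v_1)^2+(u_2-v_2)^2$. An equilateral triangle of sidelength $\ell$ is a triple $(x_1,x_2,x_3)$ of points of $\mathbb{F}_q^2$ with $\|x_1-x_2\| = \|x_2-x_3\| = \|x_3-x_1\| = \ell$. *)

theory Defs
  imports "HOL-Computational_Algebra.Primes"
begin

definition qdist :: "('a::comm_ring_1 \<times> 'a) \<Rightarrow> ('a \<times> 'a) \<Rightarrow> 'a" where
  "qdist u v = (fst u - fst v)^2 + (snd u - snd v)^2"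

definition equilateral_triangle ::
  "('a::comm_ring_1 \<times> 'a) \<Rightarrow> ('a \<times> 'a) \<Rightarrow> ('a \<times> 'a) \<Rightarrow> 'a \<Rightarrow> bool" where
  "equilateral_triangle x1 x2 x3 l \<longleftrightarrow>
     qdist x1 x2 = l \<and> qdist x2 x3 = l \<and> qdist x3 x1 = l"

end

theory Submission
  imports Defs "HOL-Number_Theory.Number_Theory" "HOL-Computational_Algebra.Polynomial"
begin

lemma fermat_ff:
  fixes x :: "'a::{field,finite}"
  assumes "x \<noteq> 0"
  shows "x ^ (card (UNIV::'a set) - 1) = 1"
proof -
  have "(\<Prod>y\<in>UNIV-{0}. x * y) = x ^ (card (UNIV :: 'a set) - 1) * \<Prod>(UNIV-{0::'a})"
    by (simp add: prod.distrib card_Diff_singleton)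
  moreover have "(\<Prod>y\<in>UNIV-{0}. x * y) = (\<Prod>y\<in>UNIV-{0}. y)"
    by (rule prod.reindex_bij_witness[of _ "\<lambda>y. y / x" "\<lambda>y. x * y"]) (use assms in auto)
  ultimately have "x ^ (card (UNIV :: 'a set) - 1) * \<Prod>(UNIV-{0::'a}) = 1 * \<Prod>(UNIV-{0::'a})"
    by simp
  moreover have "\<Prod>(UNIV-{0::'a}) \<noteq> 0" by (simp add: prod_zero_iff)
  ultimately show ?thesis by simp
qed

lemma tri_iff:
  assumes two: "(2::'a::field) \<noteq> 0"
  shows "(\<exists>(x1::'a \<times> 'a) x2 x3 l. l \<noteq> 0 \<and> equilateral_triangle x1 x2 x3 l) \<longleftrightarrow> (\<exists>s::'a. s^2 = 3)"
proof
  assume "\<exists>(x1::'a \<times> 'a) x2 x3 l. l \<noteq> 0 \<and> equilateral_triangle x1 x2 x3 l"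
  then obtain a1 a2 b1 b2 c1 c2 l :: 'a where l: "l \<noteq> 0" and
    e1: "(a1-b1)^2+(a2-b2)^2 = l" and e2: "(b1-c1)^2+(b2-c2)^2 = l" and e3: "(c1-a1)^2+(c2-a2)^2 = l"
    unfolding equilateral_triangle_def qdist_def by force
  define d where "d = (b1-a1)*(c2-a2) - (b2-a2)*(c1-a1)"
  define B where "B = (b1-a1)*(c1-a1) + (b2-a2)*(c2-a2)"
  have "2*B = ((a1-b1)^2+(a2-b2)^2) + ((c1-a1)^2+(c2-a2)^2) - ((b1-c1)^2+(b2-c2)^2)"
    unfolding B_def by (simp add: power2_eq_square algebra_simps)
  hence h1: "2*B = l" using e1 e2 e3 by simp
  have "d^2 = ((a1-b1)^2+(a2-b2)^2) * ((c1-a1)^2+(c2-a2)^2) - B^2"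
    unfolding B_def d_def by (simp add: power2_eq_square algebra_simps)
  hence h2: "d^2 = l*l - B^2" using e1 e3 by simp
  have "4*d^2 = 4*(l*l - B^2)" using h2 by simp
  also have "\<dots> = 4*(l*l) - (2*B)^2" by (simp add: power2_eq_square algebra_simps)
  finally have "4*d^2 = 4*(l*l) - (2*B)^2" .
  also have "\<dots> = 4*(l*l) - l^2" using h1 by simp
  finally have "4*d^2 = 3*(l*l)" by (simp add: power2_eq_square algebra_simps)
  hence "(2*d/l)^2 = 3" using l by (simp add: power2_eq_square field_simps)
  thus "\<exists>s::'a. s^2 = 3" by blast
next
  assume "\<exists>s::'a. s^2 = 3"
  then obtain s :: 'a where s: "s^2 = 3" by blast
  have four: "(4::'a) \<noteq> 0" using two by (metis mult_2 numeral_Bit0 mult_eq_0_iff one_add_one)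
  have "(1-1/2)^2 + (0-s/2)^2 = (1 + s^2)/(4::'a)"
    using two four by (simp add: field_simps power2_eq_square)
  also have "\<dots> = 1" using s four by simp
  finally have q: "(1-1/2)^2 + (0-s/2)^2 = (1::'a)" .
  have q2: "(1/2-0)^2 + (s/2-0)^2 = (1::'a)" 
  proof -
    have a: "(1::'a)-1/2 = 1/2" using two by (simp add: field_simps)
    have b: "(0-s/2)^2 = (s/2-0)^2" by (simp add: power2_eq_square)
    show ?thesis using q unfolding a b by simp
  qed
  have "equilateral_triangle ((0::'a),(0::'a)) (1,0) (1/2, s/2) 1"
    unfolding equilateral_triangle_def qdist_def fst_conv snd_conv
    apply (subst q)
    apply (subst q2)
    apply simp
    done
  thus "\<exists>(x1::'a \<times> 'a) x2 x3 l. l \<noteq> 0 \<and> equilateral_triangle x1 x2 x3 l"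
    using one_neq_zero by blast
qed

lemma euler_ff:
  fixes x :: "'a::{field,finite}"
  assumes two: "(2::'a) \<noteq> 0" and qodd: "odd (card (UNIV::'a set))"
    and x0: "x \<noteq> 0" and xh: "x ^ ((card (UNIV::'a set) - 1) div 2) = 1"
  shows "\<exists>s. s^2 = x"
proof (rule ccontr)
  assume ns: "\<not> (\<exists>s. s^2 = x)"
  define q where "q = card (UNIV::'a set)"
  define h where "h = (q - 1) div 2"
  have q2: "q - 1 = 2*h" using qodd unfolding h_def q_def by (simp add: odd_two_times_div_two_nat)
  have "card {0::'a, 1} \<le> q" unfolding q_def by (rule card_mono) auto
  hence "q \<ge> 2" by simp
  hence hpos: "h > 0" using q2 by simp
  define P where "P = monom (1::'a) h + [:-1:]"
  have degP: "degree P = h" unfolding P_def using hpos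
    by (subst degree_add_eq_left) (auto simp: degree_monom_eq)
  have P0: "P \<noteq> 0" using degP hpos by auto
  have Req: "{y. poly P y = 0} = {y. y^h = 1}" unfolding P_def
    by (auto simp: poly_monom)
  have Rc: "card {y::'a. y^h = 1} \<le> h" using card_poly_roots_bound[OF P0] degP Req by simp
  define Sq where "Sq = (\<lambda>y. y^2) ` (UNIV - {0::'a})"
  have SqR: "insert x Sq \<subseteq> {y. y^h = 1}"
  proof
    fix z assume "z \<in> insert x Sq"
    then consider "z = x" | y where "y \<noteq> 0" "z = y^2" unfolding Sq_def by auto
    thus "z \<in> {y. y^h = 1}"
    proof cases
      case 1 thus ?thesis using xh unfolding h_def q_def by simp
    next
      case (2 y)
      have "z^h = y^(2*h)" using 2 by (simp add: power_mult)
      also have "\<dots> = 1" using fermat_ff[OF 2(1)] q2 unfolding q_def by simp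
      finally show ?thesis by simp
    qed
  qed
  have xn: "x \<notin> Sq" using ns unfolding Sq_def by auto
  have "card (insert x Sq) \<le> h" using card_mono[OF _ SqR] Rc by (meson finite order_trans)
  hence c1: "card Sq < h" using xn by simp
  define A where "A = (\<lambda>z. SOME y. y \<noteq> 0 \<and> y^2 = z) ` Sq"
  have cov: "UNIV - {0} \<subseteq> A \<union> uminus ` A"
  proof
    fix y :: 'a assume "y \<in> UNIV - {0}"
    hence y: "y \<noteq> 0" by simp
    define r where "r = (SOME r. r \<noteq> 0 \<and> r^2 = y^2)"
    have rr: "r \<noteq> 0 \<and> r^2 = y^2" unfolding r_def by (rule someI[of _ y]) (use y in simp)
    hence "(r - y)*(r+y) = 0" by (simp add: algebra_simps power2_eq_square)
    hence "y = r \<or> y = -r" by (auto simp: add_eq_0_iff)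
    moreover have "r \<in> A" unfolding A_def Sq_def r_def using y by auto
    ultimately show "y \<in> A \<union> uminus ` A" by auto
  qed
  have "q - 1 = card (UNIV - {0::'a})" unfolding q_def by (simp add: card_Diff_singleton)
  also have "\<dots> \<le> card (A \<union> uminus ` A)" by (rule card_mono[OF _ cov]) simp
  also have "\<dots> \<le> card A + card (uminus ` A)" by (rule card_Un_le)
  also have "\<dots> \<le> card A + card A" using card_image_le[of A uminus] by simp
  also have "\<dots> \<le> card Sq + card Sq"
  proof -
    have "card A \<le> card Sq" unfolding A_def by (rule card_image_le) simp
    thus ?thesis by simp
  qed
  finally show False using q2 c1 by simp
qed

lemma Legendre_mod: "Legendre a m = Legendre (a mod m) m"
  unfolding Legendre_def QuadRes_def cong_def by simp

lemma Legendre_1_3: "Legendre 1 3 = 1"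
  unfolding Legendre_def QuadRes_def cong_def by (auto intro: exI[of _ 1])

lemma Legendre_2_3: "Legendre 2 3 = -1"
proof -
  have "\<not> QuadRes 3 2"
  proof
    assume "QuadRes 3 2"
    then obtain y :: int where "y^2 mod 3 = 2" unfolding QuadRes_def cong_def by auto
    hence e: "(y mod 3)^2 mod 3 = 2" by (simp add: power_mod)
    have "y mod 3 = 0 \<or> y mod 3 = 1 \<or> y mod 3 = 2" by presburger
    thus False using e by (auto simp: power2_eq_square)
  qed
  thus ?thesis unfolding Legendre_def cong_def by simp
qed

lemma leg3:
  fixes p :: nat
  assumes "prime p" "p > 3"
  shows "Legendre 3 (int p) = 1 \<longleftrightarrow> p mod 12 \<in> {1, 11}"
proof -
  have QR: "Legendre (int p) 3 * Legendre 3 (int p) = (-1::int) ^ ((p - 1) div 2)"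
    using Quadratic_Reciprocity[of p 3] assms by simp
  have n3: "\<not> 3 dvd p"
  proof
    assume "3 dvd p"
    hence "(3::nat) = 1 \<or> 3 = p" using assms(1) unfolding prime_nat_iff by blast
    thus False using assms(2) by simp
  qed
  hence m3: "p mod 3 = 1 \<or> p mod 3 = 2" by presburger
  have "odd p" using assms prime_odd_nat by auto
  hence m4: "p mod 4 = 1 \<or> p mod 4 = 3" by presburger
  have Lp: "Legendre (int p) 3 = (if p mod 3 = 1 then 1 else -1)"
  proof -
    have "Legendre (int p) 3 = Legendre (int (p mod 3)) 3"
      by (subst Legendre_mod) (simp add: zmod_int)
    thus ?thesis using m3 Legendre_1_3 Legendre_2_3 by auto
  qed
  have S: "(-1::int) ^ ((p - 1) div 2) = (if p mod 4 = 1 then 1 else -1)"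
  proof (cases "p mod 4 = 1")
    case True
    hence "even ((p - 1) div 2)" by presburger
    thus ?thesis using True by simp
  next
    case False
    hence "odd ((p - 1) div 2)" using m4 by presburger
    thus ?thesis using False by simp
  qed
  show ?thesis
  proof (cases "p mod 3 = 1")
    case c3: True
    show ?thesis
    proof (cases "p mod 4 = 1")
      case True
      have "p mod 12 = 1" using c3 True by presburger
      thus ?thesis using QR Lp S c3 True by simp
    next
      case False
      have "p mod 12 = 7" using c3 False m4 by presburger
      thus ?thesis using QR Lp S c3 False by simp
    qed
  next
    case c3: False
    show ?thesis
    proof (cases "p mod 4 = 1")
      case True
      have "p mod 12 = 5" using c3 m3 True by presburger
      thus ?thesis using QR Lp S c3 True by simp
    next
      case False
      have "p mod 12 = 11" using c3 m3 False m4 by presburger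
      thus ?thesis using QR Lp S c3 False by simp
    qed
  qed
qed

lemma geo_nat: "a * (\<Sum>i<n. (Suc a)^i) + 1 = (Suc a)^n"
  by (induction n) (simp_all add: algebra_simps)

lemma geo_odd: "odd (p::nat) \<Longrightarrow> even (\<Sum>i<n. p^i) \<longleftrightarrow> even n"
  by (induction n) simp_all

theorem corollary4p2:
  fixes p n :: nat
  assumes "card (UNIV :: 'a::{field,finite} set) = p ^ n"
    and "CHAR('a) = p" and "prime p" and "odd p"
  shows "(even n \<longrightarrow>
            (\<exists>(x1::'a::{field,finite} \<times> 'a) x2 x3 l. l \<noteq> 0 \<and> equilateral_triangle x1 x2 x3 l))
       \<and> (odd n \<longrightarrow>
            ((\<exists>(x1::'a::{field,finite} \<times> 'a) x2 x3 l. l \<noteq> 0 \<and> equilateral_triangle x1 x2 x3 l)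
             \<longleftrightarrow> p mod 12 \<in> {1, 3, 11}))"
proof -
  have "p \<ge> 2" using assms(3) prime_ge_2_nat by blast
  hence p2: "p \<ge> 3" using assms(4) by presburger
  have two: "(2::'a) \<noteq> 0"
  proof
    assume "(2::'a) = 0"
    hence "of_nat 2 = (0::'a)" by simp
    hence "p dvd 2" using of_nat_eq_0_iff_char_dvd assms(2) by metis
    thus False using p2 by (auto dest: dvd_imp_le)
  qed
  have d3: "p dvd 3 \<Longrightarrow> p = 3" using p2 by (auto dest: dvd_imp_le)
  have three: "(3::'a) = 0 \<longleftrightarrow> p = 3"
  proof
    assume "(3::'a) = 0"
    hence "of_nat 3 = (0::'a)" by simp
    hence "p dvd 3" using of_nat_eq_0_iff_char_dvd assms(2) by metis
    thus "p = 3" using d3 by blast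
  next
    assume "p = 3"
    thus "(3::'a) = 0" using of_nat_CHAR[where 'a='a] assms(2) by simp
  qed
  have qodd: "odd (card (UNIV::'a set))" using assms(1,4) by simp
  have T: "(\<exists>(x1::'a \<times> 'a) x2 x3 l. l \<noteq> 0 \<and> equilateral_triangle x1 x2 x3 l) \<longleftrightarrow> (\<exists>s::'a. s^2 = 3)"
    by (rule tri_iff[OF two])
  have f3: "(3::'a)^(p-1) = 1" if np: "p \<noteq> 3"
  proof -
    have "\<not> p dvd 3" using d3 np by blast
    hence "[3^(p-1) = 1] (mod CHAR('a))" using fermat_theorem[of p 3] assms(2,3) by simp
    hence "of_nat (3^(p-1)) = (of_nat 1 :: 'a)" by (simp only: of_nat_eq_iff_cong_CHAR)
    thus ?thesis by simp
  qed
  have even_case: "\<exists>s::'a. s^2 = 3" if "even n"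
  proof -
    from that obtain m where nm: "n = 2*m" by auto
    show ?thesis
    proof (cases "p = 3")
      case True thus ?thesis using three by (intro exI[of _ 0]) simp
    next
      case False
      have p3p: "(3::'a)^p = 3"
      proof -
        have "(3::'a)^p = 3^(Suc (p-1))" using p2 by simp
        also have "\<dots> = 3" using f3[OF False] by simp
        finally show ?thesis .
      qed
      have pw: "(3::'a)^(p^k) = 3" for k
      proof (induction k)
        case 0 show ?case by simp
      next
        case (Suc k)
        have "(3::'a)^(p^Suc k) = 3^(p^k * p)" by (simp only: power_Suc2)
        also have "\<dots> = ((3::'a)^(p^k))^p" by (rule power_mult)
        also have "\<dots> = 3" using Suc.IH p3p by simp
        finally show ?case .
      qed
      define t where "t = p^m"
      have t3: "(3::'a)^(t-1) = 1"
      proof -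
        have "t \<ge> 1" unfolding t_def using p2 by simp
        hence "(3::'a)^t = 3^(Suc (t-1))" by simp
        hence "(3::'a) * 3^(t-1) = 3 * 1" using pw[of m] unfolding t_def by simp
        thus ?thesis using three False by simp
      qed
      have "odd t" unfolding t_def using assms(4) by simp
      then obtain k where tk: "t = 2*k+1" by (rule oddE)
      have ct: "card (UNIV::'a set) = t^2" using assms(1) nm unfolding t_def
        by (simp add: power_mult[symmetric] mult.commute)
      have e1: "(2*k+1)^2 - 1 = 2*(2*k*(k+1))" by (simp add: power2_eq_square algebra_simps)
      have hq: "(card (UNIV::'a set) - 1) div 2 = (t - 1) * ((t+1) div 2)"
        unfolding ct tk e1 by simp
      have "(3::'a)^((card (UNIV::'a set) - 1) div 2) = 1" unfolding hq power_mult t3 by simp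
      thus ?thesis using euler_ff[OF two qodd] three False by auto
    qed
  qed
  have odd_case: "(\<exists>s::'a. s^2 = 3) \<longleftrightarrow> p mod 12 \<in> {1,3,11}" if on: "odd n"
  proof (cases "p = 3")
    case True thus ?thesis using three by (auto intro: exI[of _ 0])
  next
    case False
    hence p3: "p > 3" using p2 by simp
    have m3: "p mod 12 \<noteq> 3"
    proof
      assume "p mod 12 = 3"
      hence "3 dvd p" by presburger
      hence "(3::nat) = 1 \<or> 3 = p" using assms(3) unfolding prime_nat_iff by blast
      thus False using False by simp
    qed
    have "(\<exists>s::'a. s^2 = 3) \<longleftrightarrow> Legendre 3 (int p) = 1"
    proof
      assume "\<exists>s::'a. s^2 = 3"
      then obtain s::'a where s: "s^2 = 3" by blast
      have s0: "s \<noteq> 0" using s three False by auto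
      define h where "h = (card (UNIV::'a set) - 1) div 2"
      have "(3::'a)^h = s^(2*h)" using s by (simp add: power_mult)
      also have "2*h = card (UNIV::'a set) - 1" using qodd unfolding h_def
        by (simp add: odd_two_times_div_two_nat)
      also have "s^(card (UNIV::'a set) - 1) = 1" by (rule fermat_ff[OF s0])
      finally have h1: "(3::'a)^h = 1" .
      define N where "N = (\<Sum>i<n. p^i)"
      obtain a where pa: "p = Suc a" using p2 by (cases p) auto
      have geo: "(p - 1) * N + 1 = p^n" unfolding N_def pa using geo_nat[of a n] by simp
      have Nodd: "odd N" unfolding N_def using geo_odd[OF assms(4)] on by simp
      obtain b where pb0: "p = 2*b+1" using assms(4) by (rule oddE)
      hence pb: "p - 1 = 2*b" by simp
      have hN: "h = ((p-1) div 2) * N"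
      proof -
        have "card (UNIV::'a set) - 1 = 2 * (b * N)" using assms(1) geo pb by simp
        thus ?thesis unfolding h_def pb by simp
      qed
      define L where "L = Legendre 3 (int p)"
      have eu: "[L = 3 ^ ((p - 1) div 2)] (mod int p)"
        using euler_criterion[of p 3] assms(3) p3 unfolding L_def by simp
      hence "[L = 3 ^ ((p - 1) div 2)] (mod int CHAR('a))" using assms(2) by simp
      hence "(of_int L :: 'a) = of_int (3 ^ ((p-1) div 2))"
        by (simp only: of_int_eq_iff_cong_CHAR)
      hence eL: "(of_int L :: 'a) = 3 ^ ((p-1) div 2)" by simp
      have LN: "(of_int L :: 'a)^N = 1" using h1 hN eL by (simp add: power_mult)
      have nc: "\<not> [3 = 0] (mod int p)"
      proof
        assume "[3 = 0] (mod int p)"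
        hence "int p dvd int 3" by (simp add: cong_0_iff)
        hence "p dvd 3" by (simp only: int_dvd_int_iff)
        thus False using d3 False by blast
      qed
      have "L = 1 \<or> L = -1" unfolding L_def Legendre_def using nc by auto
      moreover have "L \<noteq> -1"
      proof
        assume "L = -1"
        hence "(-1::'a) = 1" using LN Nodd by simp
        thus False using two by (metis one_add_one neg_eq_iff_add_eq_0)
      qed
      ultimately show "Legendre 3 (int p) = 1" unfolding L_def by blast
    next
      assume "Legendre 3 (int p) = 1"
      hence "QuadRes (int p) 3" unfolding Legendre_def by (auto split: if_splits)
      then obtain y where "[y^2 = 3] (mod int p)" unfolding QuadRes_def by auto
      hence "[y^2 = 3] (mod int CHAR('a))" using assms(2) by simp
      hence "(of_int (y^2) :: 'a) = of_int 3" by (simp only: of_int_eq_iff_cong_CHAR)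
      thus "\<exists>s::'a. s^2 = 3" by (intro exI[of _ "of_int y"]) simp
    qed
    thus ?thesis using leg3[OF assms(3) p3] m3 by auto
  qed
  show ?thesis using T even_case odd_case by auto
qed

end
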